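(* Let $H = \{h_0 = 0_H, h_1, \dots, h_{t-1}\}$ be a finite abelian group with a fixed enumeration of its elements, and let $\boldsymbol{\lambda} = (\lambda_0,\dots,\lambda_{t-1})$ be a sequence of nonnegative integers. Suppose that every non-zero sum subset of type $\boldsymbol{\lambda}$ of $(\mathbb{Z} \times H) \setminus \{0_{\mathbb{Z}\times H}\}$ is sequenceable. Then for every $n \geq 2$, every non-zero sum subset of type $\boldsymbol{\lambda}$ of $(\mathbb{Z}^n \times H) \setminus \{0_{\mathbb{Z}^n\times H}\}$ is sequenceable.
   Context: For a finite subset $S$ of an abelian group with $|S| = k$, an ordering $(x_1,\dots,x_k)$ of $S$ has partial sums $(y_0,\dots,y_k)$ with $y_0 = 0$, $y_i = x_1+\cdots+x_i$. It is a sequencing if the $y_i$ are pairwise distinct, and a rotational sequencing if they are pairwise distinct except that $y_k = y_0 = 0$; $S$ is sequenceable if it has one or the other. $S$ is non-zero sum if the sum of its elements is nonzero. For an abelian group $G$ and a finite abelian group $H = \{h_0=0_H,\dots,h_{t-1}\}$, the type of a finite subset $S \subseteq G \times H$ is $(\lambda_0,\dots,\lambda_{t-1})$ where $\lambda_i$ is the number of elements of $S$ whose $H$-coordinate equals $h_i$. *)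

theory Defs
  imports "HOL-Analysis.Analysis"
begin

definition partial_sum :: "'g::monoid_add list \<Rightarrow> nat \<Rightarrow> 'g" where
  "partial_sum xs i = sum_list (take i xs)"

definition is_sequencing :: "'g::monoid_add list \<Rightarrow> bool" where
  "is_sequencing xs \<longleftrightarrow> inj_on (partial_sum xs) {0..length xs}"

definition is_rotational_sequencing :: "'g::monoid_add list \<Rightarrow> bool" where
  "is_rotational_sequencing xs \<longleftrightarrow>
     inj_on (partial_sum xs) {0..<length xs} \<and> partial_sum xs (length xs) = 0"

definition sequenceable :: "'g::monoid_add set \<Rightarrow> bool" where
  "sequenceable S \<longleftrightarrow> finite S \<and>
     (\<exists>xs. distinct xs \<and> set xs = S \<and> (is_sequencing xs \<or> is_rotational_sequencing xs))"

definition nonzero_sum :: "'g::comm_monoid_add set \<Rightarrow> bool" where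
  "nonzero_sum S \<longleftrightarrow> (\<Sum>x\<in>S. x) \<noteq> 0"

text \<open>Type of S \<subseteq> G \<times> H w.r.t. the enumeration hs of H (h_i = hs i, i < card H):
  the list (\<lambda>_0,...,\<lambda>_{t-1}) with \<lambda>_i = #{x \<in> S. snd x = h_i}.\<close>
definition has_type :: "(nat \<Rightarrow> 'h::finite) \<Rightarrow> ('g \<times> 'h) set \<Rightarrow> nat list \<Rightarrow> bool" where
  "has_type hs S lam \<longleftrightarrow> length lam = CARD('h) \<and>
     (\<forall>i<CARD('h). card {x\<in>S. snd x = hs i} = lam ! i)"

end

theory Submission
  imports Defs "HOL-Computational_Algebra.Polynomial"
begin

definition lf :: "('n::finite \<Rightarrow> nat) \<Rightarrow> int \<Rightarrow> int ^ 'n \<Rightarrow> int" where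
  "lf k t v = (\<Sum>i\<in>UNIV. v $ i * t ^ (k i))"

definition lp :: "('n::finite \<Rightarrow> nat) \<Rightarrow> int ^ 'n \<Rightarrow> int poly" where
  "lp k d = (\<Sum>i\<in>UNIV. monom (d $ i) (k i))"

lemma lf_add: "lf k t (v + w) = lf k t v + lf k t w"
  unfolding lf_def by (simp add: distrib_right sum.distrib)

lemma lf_diff: "lf k t (v - w) = lf k t v - lf k t w"
  unfolding lf_def by (simp add: left_diff_distrib sum_subtractf)

lemma lf_zero: "lf k t 0 = 0"
  unfolding lf_def by simp

lemma poly_lp: "poly (lp k d) t = lf k t d"
  unfolding lp_def lf_def by (simp add: poly_sum poly_monom)

lemma lp_nonzero:
  assumes "inj k" "d \<noteq> 0"
  shows "lp k d \<noteq> 0"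
proof -
  obtain j where j: "d $ j \<noteq> 0" using assms(2) by (metis vec_eq_iff zero_index)
  have "coeff (lp k d) (k j) = (\<Sum>i\<in>UNIV. if k j = k i then d $ i else 0)"
    unfolding lp_def by (simp add: coeff_sum coeff_monom eq_commute)
  also have "\<dots> = (\<Sum>i\<in>UNIV. if i = j then d $ i else 0)"
    using assms(1) by (intro sum.cong) (auto dest: injD)
  also have "\<dots> = d $ j" by simp
  finally show ?thesis using j by auto
qed

lemma exists_inj_lf:
  fixes A :: "(int ^ 'n::finite) set"
  assumes "finite A"
  shows "\<exists>k t. inj_on (lf k t) A"
proof -
  obtain k :: "'n \<Rightarrow> nat" where k: "inj k"
    using finite_imp_inj_to_nat_seg[of "UNIV :: 'n set"] by auto
  define D where "D = (\<lambda>(a,b). a - b) ` ((A \<times> A) - {p. fst p = snd p})"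
  have finD: "finite D" unfolding D_def using assms by auto
  have D0: "0 \<notin> D" unfolding D_def by auto
  define R where "R = (\<Union>d\<in>D. {t. poly (lp k d) t = 0})"
  have "finite R" unfolding R_def using finD D0
    by (auto intro!: poly_roots_finite lp_nonzero[OF k])
  then obtain t :: int where t: "t \<notin> R"
    using ex_new_if_finite[OF infinite_UNIV_int] by blast
  have "inj_on (lf k t) A"
  proof (rule inj_onI)
    fix a b assume ab: "a \<in> A" "b \<in> A" "lf k t a = lf k t b"
    show "a = b"
    proof (rule ccontr)
      assume "a \<noteq> b"
      then have "a - b \<in> D" unfolding D_def using ab by force
      moreover have "poly (lp k (a - b)) t = 0" using ab(3) by (simp add: poly_lp lf_diff)
      ultimately show False using t unfolding R_def by auto
    qed
  qed
  then show ?thesis by blast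
qed

theorem proposition4p3:
  fixes hs :: "nat \<Rightarrow> 'h::{ab_group_add, finite}"
    and lam :: "nat list"
  assumes enum: "bij_betw hs {..<CARD('h)} (UNIV :: 'h set)"
    and enum0: "hs 0 = 0"
    and hyp: "\<And>S :: (int \<times> 'h) set. finite S \<Longrightarrow> S \<subseteq> UNIV - {0} \<Longrightarrow>
                 nonzero_sum S \<Longrightarrow> has_type hs S lam \<Longrightarrow> sequenceable S"
    and n2: "CARD('n::finite) \<ge> 2"
    and fin: "finite T"
    and sub: "T \<subseteq> (UNIV :: ((int ^ 'n) \<times> 'h) set) - {0}"
    and nz: "nonzero_sum T"
    and ty: "has_type hs T lam"
  shows "sequenceable T"
proof -
  define B where "B = T \<union> {0, sum id T}"
  have finB: "finite B" using fin unfolding B_def by auto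
  obtain k t where inj: "inj_on (lf k t) (fst ` B)"
    using exists_inj_lf[of "fst ` B"] finB by blast
  define \<phi> where "\<phi> = (\<lambda>x :: (int ^ 'n) \<times> 'h. (lf k t (fst x), snd x))"
  have phi_add: "\<phi> (x + y) = \<phi> x + \<phi> y" for x y
    unfolding \<phi>_def by (simp add: lf_add)
  have phi0: "\<phi> 0 = 0" unfolding \<phi>_def by (simp add: lf_zero zero_prod_def)
  have injB: "inj_on \<phi> B"
  proof (rule inj_onI)
    fix x y assume "x \<in> B" "y \<in> B" "\<phi> x = \<phi> y"
    then show "x = y" unfolding \<phi>_def using inj
      by (metis (no_types, lifting) image_eqI inj_on_eq_iff prod.expand prod.inject)
  qed
  have injT: "inj_on \<phi> T" using injB unfolding B_def by (rule inj_on_subset) auto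
  have phi_sl: "\<phi> (sum_list xs) = sum_list (map \<phi> xs)" for xs
    by (induction xs) (auto simp: phi0 phi_add)
  have phi_sum: "\<phi> (sum id X) = sum \<phi> X" if "finite X" for X
    using that by (induction X rule: finite_induct) (auto simp: phi0 phi_add)
  define S where "S = \<phi> ` T"
  have finS: "finite S" unfolding S_def using fin by auto
  have subS: "S \<subseteq> UNIV - {0}"
  proof
    fix y assume "y \<in> S"
    then obtain x where x: "x \<in> T" "y = \<phi> x" unfolding S_def by auto
    have "x \<noteq> 0" using x sub by auto
    then have "\<phi> x \<noteq> \<phi> 0" using injB x unfolding B_def
      by (metis UnCI inj_on_eq_iff insertCI)
    then show "y \<in> UNIV - {0}" using x phi0 by auto
  qed
  have sumS: "sum id S = \<phi> (sum id T)"
    unfolding S_def using injT fin phi_sum[OF fin] by (simp add: sum.reindex)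
  have nzT: "sum id T \<noteq> 0" using nz unfolding nonzero_sum_def by simp
  have "\<phi> (sum id T) \<noteq> \<phi> 0" using injB nzT unfolding B_def
    by (metis UnCI inj_on_eq_iff insertCI)
  then have sumS0: "sum id S \<noteq> 0" using sumS phi0 by simp
  have nzS: "nonzero_sum S" using sumS0 unfolding nonzero_sum_def by simp
  have tyS: "has_type hs S lam"
    unfolding has_type_def
  proof (intro conjI allI impI)
    show "length lam = CARD('h)" using ty unfolding has_type_def by simp
    fix i assume i: "i < CARD('h)"
    have "{x\<in>S. snd x = hs i} = \<phi> ` {x\<in>T. snd x = hs i}"
      unfolding S_def \<phi>_def by auto
    moreover have "card (\<phi> ` {x\<in>T. snd x = hs i}) = card {x\<in>T. snd x = hs i}"
      by (rule card_image) (rule inj_on_subset[OF injT], auto)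
    ultimately show "card {x\<in>S. snd x = hs i} = lam ! i"
      using ty i unfolding has_type_def by simp
  qed
  have "sequenceable S" using hyp finS subS nzS tyS by blast
  then obtain ys where ys: "distinct ys" "set ys = S"
    "is_sequencing ys \<or> is_rotational_sequencing ys"
    unfolding sequenceable_def by blast
  have "partial_sum ys (length ys) = sum id S"
    unfolding partial_sum_def using ys(1,2) sum_list_distinct_conv_sum_set[of ys id] by simp
  then have seqy: "is_sequencing ys" using ys(3) sumS0 unfolding is_rotational_sequencing_def by auto
  define xs where "xs = map (the_inv_into T \<phi>) ys"
  have mx: "map \<phi> xs = ys" unfolding xs_def using ys(2) injT
    by (auto simp: S_def f_the_inv_into_f intro!: map_idI)
  have setx: "set xs = T" unfolding xs_def using ys(2) injT
    by (simp add: S_def the_inv_into_onto)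
  have dx: "distinct xs" using mx ys(1) by (metis distinct_map)
  have lx: "length xs = length ys" using mx by auto
  have pss: "\<phi> (partial_sum xs i) = partial_sum ys i" for i
    unfolding partial_sum_def using mx phi_sl by (metis take_map)
  have "is_sequencing xs"
    unfolding is_sequencing_def
  proof (rule inj_onI)
    fix i j assume "i \<in> {0..length xs}" "j \<in> {0..length xs}" "partial_sum xs i = partial_sum xs j"
    then have "partial_sum ys i = partial_sum ys j" "i \<in> {0..length ys}" "j \<in> {0..length ys}"
      using pss lx by metis+
    then show "i = j" using seqy unfolding is_sequencing_def by (meson inj_onD)
  qed
  then show ?thesis unfolding sequenceable_def using fin dx setx by blast
qed

end
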